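(* Let $G$ be a countable discrete group. Every $K_\sigma$ subgroup of $G^\omega$ is compactly generated if and only if every subgroup of $G$ is finitely generated.
   Context: $G^\omega$ carries the product topology. A subgroup $H$ of a topological group is compactly generated if $H=\langle K\rangle$ for some compact set $K$; it is $K_\sigma$ if it is a countable union of compact sets. *)

theory Defs
  imports "HOL-Analysis.Analysis" "HOL-Algebra.Product_Groups" "HOL-Algebra.Generated_Groups"
begin

definition omega_power :: "('a, 'b) monoid_scheme \<Rightarrow> (nat \<Rightarrow> 'a) monoid" where
  "omega_power G = product_group (UNIV :: nat set) (\<lambda>_. G)"

definition omega_topology :: "('a, 'b) monoid_scheme \<Rightarrow> (nat \<Rightarrow> 'a) topology" where
  "omega_topology G = product_topology (\<lambda>_. discrete_topology (carrier G)) (UNIV :: nat set)"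

definition Ksigma_in :: "'a topology \<Rightarrow> 'a set \<Rightarrow> bool" where
  "Ksigma_in T H \<longleftrightarrow> (\<exists>\<C>. countable \<C> \<and> (\<forall>C\<in>\<C>. compactin T C) \<and> H = \<Union>\<C>)"

definition compactly_generated_in :: "('a, 'b) monoid_scheme \<Rightarrow> 'a topology \<Rightarrow> 'a set \<Rightarrow> bool" where
  "compactly_generated_in P T H \<longleftrightarrow>
     (\<exists>K. K \<subseteq> carrier P \<and> compactin T K \<and> H = generate P K)"

definition finitely_generated_subgroup :: "('a, 'b) monoid_scheme \<Rightarrow> 'a set \<Rightarrow> bool" where
  "finitely_generated_subgroup G H \<longleftrightarrow> (\<exists>F. finite F \<and> F \<subseteq> H \<and> H = generate G F)"

end

theory Submission
  imports Defs
begin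

lemma restrict_UNIV_eq [simp]: "restrict f UNIV = f"
  by (simp add: restrict_def)

lemma op_carrier: "carrier (omega_power G) = {x. \<forall>i. x i \<in> carrier G}"
  by (auto simp: omega_power_def PiE_iff)

lemma op_one [simp]: "\<one>\<^bsub>omega_power G\<^esub> = (\<lambda>i. \<one>\<^bsub>G\<^esub>)"
  by (simp add: omega_power_def)

lemma op_mult [simp]: "x \<otimes>\<^bsub>omega_power G\<^esub> y = (\<lambda>i. x i \<otimes>\<^bsub>G\<^esub> y i)"
  by (simp add: omega_power_def)

lemma op_group: "group G \<Longrightarrow> group (omega_power G)"
  by (simp add: omega_power_def)

lemma op_inv: "group G \<Longrightarrow> x \<in> carrier (omega_power G) \<Longrightarrow>
    inv\<^bsub>omega_power G\<^esub> x = (\<lambda>i. inv\<^bsub>G\<^esub> x i)"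
  unfolding omega_power_def by (subst inv_product_group) (auto simp: PiE_iff)

lemma ot_topspace [simp]: "topspace (omega_topology G) = carrier (omega_power G)"
  by (auto simp: omega_topology_def omega_power_def)

lemma coord_cont: "continuous_map (omega_topology G) (discrete_topology (carrier G)) (\<lambda>x. x k)"
  unfolding omega_topology_def by (rule continuous_map_product_projection) simp

lemma coord_hom: "group G \<Longrightarrow> group_hom (omega_power G) G (\<lambda>x. x k)"
  apply (rule group_hom.intro)
    apply (simp add: op_group)
   apply simp
  apply (rule group_hom_axioms.intro)
  apply (auto simp: hom_def op_carrier)
  done

lemma coord_finite:
  assumes "compactin (omega_topology G) S"
  shows "finite ((\<lambda>x. x k) ` S)"
  using image_compactin[OF assms coord_cont[of G k]] by (simp add: compactin_discrete_topology)

lemma lmult_cont: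
  assumes "group G" "w \<in> carrier (omega_power G)"
  shows "continuous_map (omega_topology G) (omega_topology G) (\<lambda>x. w \<otimes>\<^bsub>omega_power G\<^esub> x)"
proof -
  have "continuous_map (omega_topology G) (discrete_topology (carrier G)) (\<lambda>x. w k \<otimes>\<^bsub>G\<^esub> x k)" for k
  proof -
    have "continuous_map (discrete_topology (carrier G)) (discrete_topology (carrier G)) (\<lambda>a. w k \<otimes>\<^bsub>G\<^esub> a)"
      using assms by (auto simp: op_carrier intro: monoid.m_closed[OF group.is_monoid[OF assms(1)]])
    from continuous_map_compose[OF coord_cont this] show ?thesis by (simp add: o_def)
  qed
  then show ?thesis
    unfolding op_mult by (subst (2) omega_topology_def) (simp add: continuous_map_componentwise_UNIV)
qed

definition Zn :: "('a,'b) monoid_scheme \<Rightarrow> nat \<Rightarrow> (nat \<Rightarrow> 'a) set" where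
  "Zn G n = {x \<in> carrier (omega_power G). \<forall>i<n. x i = \<one>\<^bsub>G\<^esub>}"

lemma Zn_closed: "closedin (omega_topology G) (Zn G n)"
proof (induction n)
  case 0
  then show ?case by (simp add: Zn_def flip: ot_topspace)
next
  case (Suc n)
  have e: "Zn G (Suc n) = Zn G n \<inter> {x \<in> topspace (omega_topology G). x n \<in> {\<one>\<^bsub>G\<^esub>}}"
    by (auto simp: Zn_def less_Suc_eq)
  have "closedin (omega_topology G) {x \<in> topspace (omega_topology G). x n \<in> {\<one>\<^bsub>G\<^esub>}}"
  proof (cases "\<one>\<^bsub>G\<^esub> \<in> carrier G")
    case True
    then show ?thesis by (intro closedin_continuous_map_preimage[OF coord_cont]) simp
  next
    case False
    then have "{x \<in> topspace (omega_topology G). x n \<in> {\<one>\<^bsub>G\<^esub>}} = {}"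
      using False by (auto simp: op_carrier) (metis)
    then show ?thesis by (metis closedin_empty)
  qed
  then show ?case using Suc e by (simp add: closedin_Int)
qed

lemma Zn_subgroup: assumes "group G" shows "subgroup (Zn G n) (omega_power G)"
proof -
  interpret group G by fact
  show ?thesis
    by (rule group.subgroupI[OF op_group[OF assms]]) (auto simp: Zn_def op_carrier op_inv[OF assms] intro!: exI[of _ "\<lambda>i. \<one>\<^bsub>G\<^esub>"])
qed

lemma union_compact:
  assumes G: "group G" and cS: "\<And>n. compactin (omega_topology G) (S n)"
    and sub: "\<And>n. S n \<subseteq> Zn G n"
  shows "compactin (omega_topology G) (insert (\<lambda>i. \<one>\<^bsub>G\<^esub>) (\<Union>n. S n))"
  unfolding compactin_def
proof (intro conjI allI impI)
  have e: "(\<lambda>i. \<one>\<^bsub>G\<^esub>) \<in> carrier (omega_power G)"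
    using group.is_monoid[OF G, THEN monoid.one_closed] by (simp add: op_carrier)
  show "insert (\<lambda>i. \<one>\<^bsub>G\<^esub>) (\<Union>n. S n) \<subseteq> topspace (omega_topology G)"
    using e compactin_subset_topspace[OF cS] by auto
  fix \<U> assume A: "(\<forall>U\<in>\<U>. openin (omega_topology G) U) \<and> insert (\<lambda>i. \<one>\<^bsub>G\<^esub>) (\<Union>n. S n) \<subseteq> \<Union>\<U>"
  then obtain U0 where U0: "U0 \<in> \<U>" "(\<lambda>i. \<one>\<^bsub>G\<^esub>) \<in> U0" by auto
  then have "openin (product_topology (\<lambda>_. discrete_topology (carrier G)) UNIV) U0"
    using A by (simp add: omega_topology_def)
  then obtain U where U: "finite {i. U i \<noteq> carrier G}" "(\<lambda>i. \<one>\<^bsub>G\<^esub>) \<in> PiE UNIV U" "PiE UNIV U \<subseteq> U0"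
    using U0(2) unfolding openin_product_topology_alt by force
  obtain N where N: "{i. U i \<noteq> carrier G} \<subseteq> {..<N}"
    using finite_nat_bounded[OF U(1)] by blast
  have big: "S n \<subseteq> U0" if "N \<le> n" for n
  proof
    fix y assume y: "y \<in> S n"
    then have y1: "y \<in> carrier (omega_power G)" "\<forall>i<n. y i = \<one>\<^bsub>G\<^esub>" using sub[of n] by (auto simp: Zn_def)
    have "y \<in> PiE UNIV U"
    proof (unfold PiE_iff, intro conjI ballI)
      fix i :: nat
      show "y i \<in> U i"
      proof (cases "U i = carrier G")
        case True then show ?thesis using y1 by (simp add: op_carrier)
      next
        case False
        then have "i < n" using N that by auto
        then show ?thesis using y1 U(2) by (auto simp: PiE_iff)
      qed
    qed simp
    then show "y \<in> U0" using U(3) by blast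
  qed
  have "\<forall>n. \<exists>F. finite F \<and> F \<subseteq> \<U> \<and> S n \<subseteq> \<Union>F"
  proof
    fix n
    have "S n \<subseteq> \<Union>\<U>" using A by blast
    then show "\<exists>F. finite F \<and> F \<subseteq> \<U> \<and> S n \<subseteq> \<Union>F"
      using cS[of n] A unfolding compactin_def by blast
  qed
  then obtain F where F: "\<And>n. finite (F n) \<and> F n \<subseteq> \<U> \<and> S n \<subseteq> \<Union>(F n)" by metis
  show "\<exists>\<F>. finite \<F> \<and> \<F> \<subseteq> \<U> \<and> insert (\<lambda>i. \<one>\<^bsub>G\<^esub>) (\<Union>n. S n) \<subseteq> \<Union>\<F>"
  proof (intro exI conjI)
    show "finite (insert U0 (\<Union>n<N. F n))" using F by simp
    show "insert U0 (\<Union>n<N. F n) \<subseteq> \<U>" using F U0 by auto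
    show "insert (\<lambda>i. \<one>\<^bsub>G\<^esub>) (\<Union>n. S n) \<subseteq> \<Union>(insert U0 (\<Union>n<N. F n))"
    proof
      fix y assume "y \<in> insert (\<lambda>i. \<one>\<^bsub>G\<^esub>) (\<Union>n. S n)"
      then consider "y = (\<lambda>i. \<one>\<^bsub>G\<^esub>)" | n where "y \<in> S n" by auto
      then show "y \<in> \<Union>(insert U0 (\<Union>n<N. F n))"
      proof cases
        case 1 then show ?thesis using U0 by auto
      next
        case 2
        show ?thesis
        proof (cases "N \<le> n")
          case True then show ?thesis using big 2 by auto
        next
          case False
          then have "n \<in> {..<N}" by simp
          then show ?thesis using F[of n] 2 by blast
        qed
      qed
    qed
  qed
qed

lemma forward_dir:
  assumes G: "group G" and cG: "countable (carrier G)"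
    and L: "\<forall>H. subgroup H (omega_power G) \<and> Ksigma_in (omega_topology G) H
              \<longrightarrow> compactly_generated_in (omega_power G) (omega_topology G) H"
    and H: "subgroup H G"
  shows "finitely_generated_subgroup G H"
proof -
  interpret group G by fact
  interpret P: group "omega_power G" using op_group[OF G] .
  define D where "D = (\<lambda>h. \<lambda>i::nat. h) ` H"
  have HG: "H \<subseteq> carrier G" using H subgroup.subset by blast
  have DP: "D \<subseteq> carrier (omega_power G)" using HG by (auto simp: D_def op_carrier)
  have sD: "subgroup D (omega_power G)"
  proof (rule P.subgroupI[OF DP])
    show "D \<noteq> {}" using H subgroup.one_closed D_def by blast
    show "inv\<^bsub>omega_power G\<^esub> a \<in> D" if "a \<in> D" for a
      using that DP by (auto simp: D_def op_inv[OF G] subgroup.m_inv_closed[OF H])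
    show "a \<otimes>\<^bsub>omega_power G\<^esub> b \<in> D" if "a \<in> D" "b \<in> D" for a b
      using that by (auto simp: D_def subgroup.m_closed[OF H])
  qed
  have kD: "Ksigma_in (omega_topology G) D"
    unfolding Ksigma_in_def
  proof (intro exI conjI ballI)
    have "countable H" using cG HG countable_subset by blast
    then show "countable ((\<lambda>d. {d}) ` D)" unfolding D_def by (intro countable_image)
    show "compactin (omega_topology G) C" if "C \<in> (\<lambda>d. {d}) ` D" for C
      using that DP by (auto simp del: op_mult)
    show "D = \<Union>((\<lambda>d. {d}) ` D)" by blast
  qed
  obtain K where K: "K \<subseteq> carrier (omega_power G)" "compactin (omega_topology G) K"
      "D = generate (omega_power G) K"
    using L sD kD unfolding compactly_generated_in_def by meson
  interpret h: group_hom "omega_power G" G "\<lambda>x. x 0" using coord_hom[OF G] .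
  have "(\<lambda>x. x 0) ` D = H" unfolding D_def image_image by simp
  then have eq: "H = generate G ((\<lambda>x. x 0) ` K)"
    using h.generate_img[OF K(1)] K(3) by simp
  have "K \<subseteq> D" by (subst K(3)) (auto intro: generate.incl)
  then have sub: "(\<lambda>x. x 0) ` K \<subseteq> H" by (auto simp: D_def)
  show ?thesis unfolding finitely_generated_subgroup_def
    by (rule exI[of _ "(\<lambda>x. x 0) ` K"], intro conjI, rule coord_finite[OF K(2)], rule sub, rule eq)
qed

lemma claim_lemma:
  assumes G: "group G" and H: "subgroup H (omega_power G)"
    and M2: "\<And>n. M n \<subseteq> H \<inter> Zn G n"
    and M3: "\<And>n. (\<lambda>x. x n) ` (H \<inter> Zn G n) = generate G ((\<lambda>x. x n) ` M n)"
  shows "\<forall>x\<in>H. \<exists>w\<in>generate (omega_power G) (\<Union>k<n. M k). \<forall>i<n. w i = x i"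
proof -
  interpret group G by fact
  interpret P: group "omega_power G" using op_group[OF G] .
  note op_mult[simp del]
  define E where "E n = (\<Union>k<n. M k)" for n
  have HP: "H \<subseteq> carrier (omega_power G)" using H subgroup.subset by blast
  have MP: "M n \<subseteq> carrier (omega_power G)" for n using M2 HP by blast
  have EH: "E n \<subseteq> H" for n using M2 by (auto simp: E_def)
  have EP: "E n \<subseteq> carrier (omega_power G)" for n using EH HP by blast
  have genH: "generate (omega_power G) (E n) \<subseteq> H" for n
    by (rule P.generate_subgroup_incl[OF EH H])
  have main: "\<forall>x\<in>H. \<exists>w\<in>generate (omega_power G) (E n). \<forall>i<n. w i = x i"
  proof (induction n)
    case 0
    then show ?case using generate.one by blast
  next
    case (Suc n)
    show ?case
    proof
      fix x assume xH: "x \<in> H"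
      then obtain w where w: "w \<in> generate (omega_power G) (E n)" "\<forall>i<n. w i = x i"
        using Suc[rule_format, OF xH] by (elim bexE)
      have wP: "w \<in> carrier (omega_power G)" using P.generate_in_carrier[OF EP w(1)] .
      have xP: "x \<in> carrier (omega_power G)" using xH HP by blast
      define r where "r = inv\<^bsub>omega_power G\<^esub> w \<otimes>\<^bsub>omega_power G\<^esub> x"
      have wH: "w \<in> H" using genH w(1) by blast
      have rH: "r \<in> H" unfolding r_def
        using wH xH subgroup.m_closed[OF H] subgroup.m_inv_closed[OF H] by blast
      have ri: "r i = inv\<^bsub>G\<^esub> (w i) \<otimes>\<^bsub>G\<^esub> x i" for i
        using wP by (simp add: r_def op_inv[OF G] op_mult)
      have rZ: "r \<in> Zn G n"
        unfolding Zn_def using rH HP ri w(2) xP by (auto simp: op_carrier)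
      interpret h: group_hom "omega_power G" G "\<lambda>x. x n" using coord_hom[OF G] .
      have "r n \<in> (\<lambda>x. x n) ` (H \<inter> Zn G n)" using rH rZ by blast
      then have "r n \<in> generate G ((\<lambda>x. x n) ` M n)"
        unfolding M3 .
      also have "\<dots> = (\<lambda>x. x n) ` generate (omega_power G) (M n)"
        by (rule h.generate_img[OF MP])
      finally obtain u where u: "u \<in> generate (omega_power G) (M n)" "u n = r n" by (metis imageE)
      have "generate (omega_power G) (M n) \<subseteq> Zn G n"
        using M2 by (intro P.generate_subgroup_incl[OF _ Zn_subgroup[OF G]]) blast
      then have uZ: "u \<in> Zn G n" using u(1) by blast
      have sub1: "generate (omega_power G) (E n) \<subseteq> generate (omega_power G) (E (Suc n))"
        unfolding E_def by (rule P.mono_generate, rule UN_mono) auto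
      have sub2: "generate (omega_power G) (M n) \<subseteq> generate (omega_power G) (E (Suc n))"
        unfolding E_def by (rule P.mono_generate) (intro UN_upper[of n "{..<Suc n}" M, simplified])
      have w'gen: "w \<otimes>\<^bsub>omega_power G\<^esub> u \<in> generate (omega_power G) (E (Suc n))"
        using sub1 sub2 w(1) u(1) by (intro subgroup.m_closed[OF P.generate_is_subgroup[OF EP]]) blast+
      have "\<forall>i<Suc n. (w \<otimes>\<^bsub>omega_power G\<^esub> u) i = x i"
      proof (intro allI impI)
        fix i assume "i < Suc n"
        then consider "i < n" | "i = n" by linarith
        then show "(w \<otimes>\<^bsub>omega_power G\<^esub> u) i = x i"
        proof cases
          case 1
          then show ?thesis using uZ wP xP w(2) by (simp add: op_mult Zn_def op_carrier)
        next
          case 2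
          have wn: "w n \<in> carrier G" "x n \<in> carrier G" using wP xP by (auto simp: op_carrier)
          show ?thesis using 2 u(2) ri wn by (simp add: op_mult m_assoc[symmetric])
        qed
      qed
      then show "\<exists>w\<in>generate (omega_power G) (E (Suc n)). \<forall>i<Suc n. w i = x i"
        using w'gen by blast
    qed
  qed
  then show ?thesis unfolding E_def .
qed

lemma backward_dir:
  assumes G: "group G" and R: "\<forall>H. subgroup H G \<longrightarrow> finitely_generated_subgroup G H"
    and H: "subgroup H (omega_power G)" and kH: "Ksigma_in (omega_topology G) H"
  shows "compactly_generated_in (omega_power G) (omega_topology G) H"
proof -
  interpret group G by fact
  interpret P: group "omega_power G" using op_group[OF G] .
  note op_mult[simp del]
  obtain \<C> where C: "countable \<C>" "\<And>C. C\<in>\<C> \<Longrightarrow> compactin (omega_topology G) C" "H = \<Union>\<C>"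
    using kH unfolding Ksigma_in_def by blast
  have ne: "\<C> \<noteq> {}" using C(3) subgroup.one_closed[OF H] by auto
  define Kn where "Kn = from_nat_into \<C>"
  have KnC: "Kn n \<in> \<C>" for n using from_nat_into[OF ne] Kn_def by simp
  have Kc: "compactin (omega_topology G) (Kn n)" for n using C(2) KnC by simp
  have KH: "Kn n \<subseteq> H" for n using C(3) KnC by blast
  have Hcov: "\<exists>n. x \<in> Kn n" if xH0: "x \<in> H" for x
  proof -
    obtain C0 where "C0 \<in> \<C>" "x \<in> C0" using xH0 C(3) by blast
    then show ?thesis using from_nat_into_to_nat_on[OF C(1)] Kn_def by metis
  qed
  have HP: "H \<subseteq> carrier (omega_power G)" using H subgroup.subset by blast
  have ex_M: "\<exists>M. finite M \<and> M \<subseteq> H \<inter> Zn G n \<and>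
      (\<lambda>x. x n) ` (H \<inter> Zn G n) = generate G ((\<lambda>x. x n) ` M)" for n
  proof -
    interpret h: group_hom "omega_power G" G "\<lambda>x. x n" using coord_hom[OF G] .
    have "subgroup ((\<lambda>x. x n) ` (H \<inter> Zn G n)) G"
      by (rule h.subgroup_img_is_subgroup[OF subgroup_Int[OF H Zn_subgroup[OF G]]])
    then have "finitely_generated_subgroup G ((\<lambda>x. x n) ` (H \<inter> Zn G n))"
      using R by simp
    then obtain F where F: "finite F" "F \<subseteq> (\<lambda>x. x n) ` (H \<inter> Zn G n)"
        "(\<lambda>x. x n) ` (H \<inter> Zn G n) = generate G F"
      unfolding finitely_generated_subgroup_def by (elim exE conjE)
    obtain M where M: "M \<subseteq> H \<inter> Zn G n" "finite M" "F = (\<lambda>x. x n) ` M"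
      using finite_subset_image[OF F(1) F(2)] by (elim exE conjE)
    show ?thesis
      by (rule exI[of _ M], intro conjI, rule M(2), rule M(1), simp only: F(3) M(3))
  qed
  then obtain M where M: "\<And>n. finite (M n)" "\<And>n. M n \<subseteq> H \<inter> Zn G n"
      "\<And>n. (\<lambda>x. x n) ` (H \<inter> Zn G n) = generate G ((\<lambda>x. x n) ` M n)"
    by metis
  have MP: "M n \<subseteq> carrier (omega_power G)" for n using M(2) HP by blast
  define E where "E n = (\<Union>k<n. M k)" for n
  have EH: "E n \<subseteq> H" for n using M(2) by (auto simp: E_def)
  have EP: "E n \<subseteq> carrier (omega_power G)" for n using EH HP by blast
  have genH: "generate (omega_power G) (E n) \<subseteq> H" for n
    by (rule P.generate_subgroup_incl[OF EH H])
  have claim: "\<forall>x\<in>H. \<exists>w\<in>generate (omega_power G) (E n). \<forall>i<n. w i = x i" for n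
    unfolding E_def by (rule claim_lemma[OF G H M(2) M(3)])
  define V where "V n = (\<lambda>h. restrict h {..<n}) ` Kn n" for n
  have Vfin: "finite (V n)" for n
  proof -
    have "V n \<subseteq> PiE {..<n} (\<lambda>i. (\<lambda>x. x i) ` Kn n)"
      unfolding V_def by (intro image_subsetI) (simp only: restrict_PiE_iff, blast)
    then show ?thesis
      by (rule finite_subset) (intro finite_PiE coord_finite[OF Kc]; simp)
  qed
  define ws where "ws n v = (SOME w. w \<in> generate (omega_power G) (E n) \<and> (\<forall>i<n. w i = v i))" for n v
  have ws: "ws n (restrict h {..<n}) \<in> generate (omega_power G) (E n) \<and>
            (\<forall>i<n. ws n (restrict h {..<n}) i = h i)" if "h \<in> H" for n h
  proof -
    have "\<exists>w. w \<in> generate (omega_power G) (E n) \<and> (\<forall>i<n. w i = restrict h {..<n} i)"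
      using claim[of n] that by auto
    from someI_ex[OF this] show ?thesis unfolding ws_def by simp
  qed
  have wsP: "ws n v \<in> carrier (omega_power G)" if "v \<in> V n" for n v
    using that ws KH P.generate_in_carrier[OF EP] unfolding V_def by blast
  have wsH: "ws n v \<in> H" if "v \<in> V n" for n v
    using that ws KH genH unfolding V_def by blast
  define L where "L n = Zn G n \<inter> (\<Union>v\<in>V n. (\<lambda>h. inv\<^bsub>omega_power G\<^esub> (ws n v) \<otimes>\<^bsub>omega_power G\<^esub> h) ` Kn n)" for n
  have Lc: "compactin (omega_topology G) (L n)" for n
    unfolding L_def
  proof (rule closed_Int_compactin[OF Zn_closed], rule compactin_Union)
    show "finite ((\<lambda>v. (\<lambda>h. inv\<^bsub>omega_power G\<^esub> (ws n v) \<otimes>\<^bsub>omega_power G\<^esub> h) ` Kn n) ` V n)"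
      using Vfin by simp
    fix S assume "S \<in> (\<lambda>v. (\<lambda>h. inv\<^bsub>omega_power G\<^esub> (ws n v) \<otimes>\<^bsub>omega_power G\<^esub> h) ` Kn n) ` V n"
    then obtain v where v: "v \<in> V n" "S = (\<lambda>h. inv\<^bsub>omega_power G\<^esub> (ws n v) \<otimes>\<^bsub>omega_power G\<^esub> h) ` Kn n"
      by blast
    show "compactin (omega_topology G) S"
      unfolding v(2) by (rule image_compactin[OF Kc lmult_cont[OF G P.inv_closed[OF wsP[OF v(1)]]]])
  qed
  have LH: "L n \<subseteq> H" for n
  proof
    fix y assume "y \<in> L n"
    then obtain v h where "v \<in> V n" "h \<in> Kn n" "y = inv\<^bsub>omega_power G\<^esub> (ws n v) \<otimes>\<^bsub>omega_power G\<^esub> h"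
      unfolding L_def by blast
    then show "y \<in> H" using wsH KH subgroup.m_closed[OF H] subgroup.m_inv_closed[OF H] by blast
  qed
  have LZ: "L n \<subseteq> Zn G n" for n unfolding L_def by blast
  define Ks where "Ks = insert (\<lambda>i. \<one>\<^bsub>G\<^esub>) (\<Union>n. M n \<union> L n)"
  have Kscpt: "compactin (omega_topology G) Ks"
    unfolding Ks_def
  proof (rule union_compact[OF G])
    fix n
    show "compactin (omega_topology G) (M n \<union> L n)"
      using compactin_Un finite_imp_compactin[OF _ M(1)] MP Lc by (metis ot_topspace)
    show "M n \<union> L n \<subseteq> Zn G n" using M(2) LZ by blast
  qed
  have one_H: "(\<lambda>i. \<one>\<^bsub>G\<^esub>) \<in> H" using subgroup.one_closed[OF H] by simp
  have MLH: "M n \<union> L n \<subseteq> H" for n using M(2)[of n] LH[of n] by blast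
  have KsH: "Ks \<subseteq> H"
    unfolding Ks_def using one_H MLH by blast
  have KsP: "Ks \<subseteq> carrier (omega_power G)" using KsH HP by blast
  have "H = generate (omega_power G) Ks"
  proof
    show "generate (omega_power G) Ks \<subseteq> H" by (rule P.generate_subgroup_incl[OF KsH H])
    show "H \<subseteq> generate (omega_power G) Ks"
    proof
      fix x assume xH: "x \<in> H"
      then obtain n where xK: "x \<in> Kn n" using Hcov by blast
      define v where "v = restrict x {..<n}"
      have vV: "v \<in> V n" unfolding V_def v_def using xK by blast
      define w where "w = ws n v"
      have w: "w \<in> generate (omega_power G) (E n)" "\<forall>i<n. w i = x i"
        using ws[OF xH] unfolding w_def v_def by auto
      have wP: "w \<in> carrier (omega_power G)" using wsP[OF vV] w_def by simp
      have xP: "x \<in> carrier (omega_power G)" using xH HP by blast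
      define r where "r = inv\<^bsub>omega_power G\<^esub> w \<otimes>\<^bsub>omega_power G\<^esub> x"
      have rH: "r \<in> H" unfolding r_def
        using wsH[OF vV] w_def xH subgroup.m_closed[OF H] subgroup.m_inv_closed[OF H] by blast
      have ri: "r i = inv\<^bsub>G\<^esub> (w i) \<otimes>\<^bsub>G\<^esub> x i" for i
        using wP by (simp add: r_def op_inv[OF G] op_mult)
      have rZ: "r \<in> Zn G n"
        unfolding Zn_def using rH HP ri w(2) xP by (auto simp: op_carrier)
      have "r \<in> L n" unfolding L_def using rZ vV xK unfolding r_def w_def by blast
      then have rK: "r \<in> generate (omega_power G) Ks"
        by (intro generate.incl) (auto simp: Ks_def)
      have "E n \<subseteq> Ks" using M(2) by (auto simp: Ks_def E_def)
      then have wK: "w \<in> generate (omega_power G) Ks" using P.mono_generate w(1) by blast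
      have "x = w \<otimes>\<^bsub>omega_power G\<^esub> r"
        unfolding r_def using wP xP by (simp add: P.m_assoc[symmetric] del: op_one)
      then show "x \<in> generate (omega_power G) Ks" using generate.eng[OF wK rK] by simp
    qed
  qed
  then show ?thesis unfolding compactly_generated_in_def using KsP Kscpt by blast
qed

theorem mainTheorem4:
  fixes G :: "('a, 'b) monoid_scheme"
  assumes "group G"
    and "countable (carrier G)"
  shows "(\<forall>H. subgroup H (omega_power G) \<and> Ksigma_in (omega_topology G) H
              \<longrightarrow> compactly_generated_in (omega_power G) (omega_topology G) H)
         \<longleftrightarrow> (\<forall>H. subgroup H G \<longrightarrow> finitely_generated_subgroup G H)"
proof
  assume L: "\<forall>H. subgroup H (omega_power G) \<and> Ksigma_in (omega_topology G) H
              \<longrightarrow> compactly_generated_in (omega_power G) (omega_topology G) H"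
  show "\<forall>H. subgroup H G \<longrightarrow> finitely_generated_subgroup G H"
    using forward_dir[OF assms L] by blast
next
  assume R: "\<forall>H. subgroup H G \<longrightarrow> finitely_generated_subgroup G H"
  show "\<forall>H. subgroup H (omega_power G) \<and> Ksigma_in (omega_topology G) H
              \<longrightarrow> compactly_generated_in (omega_power G) (omega_topology G) H"
    using backward_dir[OF assms(1) R] by blast
qed

end
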